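(* Let $m_a, M_a \in \mathbb{R}$ and $x_a>1$, and suppose that for all $x > x_a$ $$ x \sum_{k=0}^{4} \frac{k!}{\log^{k+1}x}+ \frac{m_a x}{\log^6 x} < \pi(x) < x \sum_{k=0}^{4} \frac{k!}{\log^{k+1}x}+\frac{M_a x}{\log^6 x}.$$ Then there exists a number $x_a'$, determined completely by $m_a$, $M_a$ and $x_a$, such that $$\pi(x)^2 < \frac{e\,x}{\log x}\,\pi\!\Big(\frac{x}{e}\Big)$$ holds for all $x > \max(e\,x_a, x_a')$.
   Context: $\pi(x)$ denotes the number of primes less than or equal to $x$; $\log$ is the natural logarithm. *)

theory Defs
  imports Complex_Main "HOL-Computational_Algebra.Primes"
begin

definition primepi :: "real \<Rightarrow> real" where
  "primepi x = real (card {p::nat. prime p \<and> real p \<le> x})"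

end

theory Submission imports Defs "HOL-Real_Asymp.Real_Asymp" begin
lemma sum5: "(\<Sum>k=0..4. fact k / (y::real) ^ (k+1)) = 1/y + 1/y^2 + 2/y^3 + 6/y^4 + 24/y^5"
  by (simp add: eval_nat_numeral fact_numeral)

lemma keyL: "eventually (\<lambda>L::real. (1/L + 1/L^2 + 2/L^3 + 6/L^4 + 24/L^5 + M/L^6)^2 <
  (1/L) * (1/(L-1) + 1/(L-1)^2 + 2/(L-1)^3 + 6/(L-1)^4 + 24/(L-1)^5 + m/(L-1)^6)) at_top"
proof -
  define A where "A = (\<lambda>L::real. 1/L + 1/L^2 + 2/L^3 + 6/L^4 + 24/L^5)"
  define B where "B = (\<lambda>L::real. 1/(L-1) + 1/(L-1)^2 + 2/(L-1)^3 + 6/(L-1)^4 + 24/(L-1)^5)"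
  have t0: "((\<lambda>L::real. L^6 * ((1/L) * B L - (A L)^2)) \<longlongrightarrow> 1) at_top"
    unfolding A_def B_def by real_asymp
  have t1: "((\<lambda>L::real. L^6 * (1/(L*(L-1)^6))) \<longlongrightarrow> 0) at_top" by real_asymp
  have t2: "((\<lambda>L::real. L^6 * (2*A L/L^6)) \<longlongrightarrow> 0) at_top" unfolding A_def by real_asymp
  have t3: "((\<lambda>L::real. L^6 * (1/L^12)) \<longlongrightarrow> 0) at_top" by real_asymp
  have "((\<lambda>L::real. L^6 * ((1/L) * B L - (A L)^2) + m * (L^6 * (1/(L*(L-1)^6)))
        - M * (L^6 * (2*A L/L^6)) - M^2 * (L^6 * (1/L^12))) \<longlongrightarrow> 1 + m*0 - M*0 - M^2*0) at_top"
    by (intro tendsto_intros t0 t1 t2 t3)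
  hence "eventually (\<lambda>L::real. L^6 * ((1/L) * B L - (A L)^2) + m * (L^6 * (1/(L*(L-1)^6)))
        - M * (L^6 * (2*A L/L^6)) - M^2 * (L^6 * (1/L^12)) > 0) at_top"
    by (intro order_tendstoD) auto
  moreover have "eventually (\<lambda>L::real. L > 1) at_top" by (rule eventually_gt_at_top)
  ultimately show ?thesis
  proof eventually_elim
    case (elim L)
    have eq: "L^6 * ((1/L) * B L - (A L)^2) + m * (L^6 * (1/(L*(L-1)^6)))
        - M * (L^6 * (2*A L/L^6)) - M^2 * (L^6 * (1/L^12))
        = L^6 * ((1/L) * (B L + m/(L-1)^6) - (A L + M/L^6)^2)"
      using elim(2) by (simp add: power2_eq_square field_simps)
    have "L^6 * ((1/L) * (B L + m/(L-1)^6) - (A L + M/L^6)^2) > 0" using elim(1) eq by simp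
    hence "(1/L) * (B L + m/(L-1)^6) - (A L + M/L^6)^2 > 0"
      using elim(2) by (simp add: zero_less_mult_iff)
    thus ?case unfolding A_def B_def by (simp add: algebra_simps)
  qed
qed

theorem lemma1:
  fixes m_a M_a x_a :: real
  assumes "x_a > 1"
  assumes "\<And>x. x > x_a \<Longrightarrow>
      x * (\<Sum>k=0..4. fact k / ln x ^ (k+1)) + m_a * x / ln x ^ 6 < primepi x \<and>
      primepi x < x * (\<Sum>k=0..4. fact k / ln x ^ (k+1)) + M_a * x / ln x ^ 6"
  shows "\<exists>x_a'. \<forall>x. x > max (exp 1 * x_a) x_a' \<longrightarrow>
      primepi x ^ 2 < exp 1 * x / ln x * primepi (x / exp 1)"
proof -
  have ev: "eventually (\<lambda>x. (1/ln x + 1/ln x^2 + 2/ln x^3 + 6/ln x^4 + 24/ln x^5 + M_a/ln x^6)^2 <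
  (1/ln x) * (1/(ln x-1) + 1/(ln x-1)^2 + 2/(ln x-1)^3 + 6/(ln x-1)^4 + 24/(ln x-1)^5 + m_a/(ln x-1)^6)) at_top"
    using keyL[of M_a m_a] ln_at_top by (rule eventually_compose_filterlim)
  then obtain x0 where x0: "\<And>x. x \<ge> x0 \<Longrightarrow> (1/ln x + 1/ln x^2 + 2/ln x^3 + 6/ln x^4 + 24/ln x^5 + M_a/ln x^6)^2 <
  (1/ln x) * (1/(ln x-1) + 1/(ln x-1)^2 + 2/(ln x-1)^3 + 6/(ln x-1)^4 + 24/(ln x-1)^5 + m_a/(ln x-1)^6)"
    by (auto simp: eventually_at_top_linorder)
  show ?thesis
  proof (intro exI allI impI)
    fix x assume hx: "x > max (exp 1 * x_a) x0"
    have e1: "exp 1 > (1::real)" by simp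
    have xa_lt: "x_a < exp 1 * x_a" using assms(1) e1 by simp
    have xgt: "x > x_a" using hx xa_lt by simp
    have xe: "x / exp 1 > x_a" using hx by (simp add: field_simps)
    have xpos: "x > 0" using xgt assms(1) by simp
    have xe1: "x / exp 1 > 1" using xe assms(1) by linarith
    have "exp 1 < x" using xe1 exp_gt_zero[of 1] by (simp add: less_divide_eq)
    hence "ln (exp 1) < ln x" using ln_less_cancel_iff[of "exp 1" x] xpos by simp
    hence "1 < ln x" by simp
    hence lnx1: "ln x - 1 > 0" by simp
    hence lnpos: "ln x > 0" by simp
    have lndiv: "ln (x / exp 1) = ln x - 1" using xpos by (simp add: ln_div)
    define L where "L = ln x"
    define S where "S = 1/L + 1/L^2 + 2/L^3 + 6/L^4 + 24/L^5"
    define T where "T = 1/(L-1) + 1/(L-1)^2 + 2/(L-1)^3 + 6/(L-1)^4 + 24/(L-1)^5"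
    have up: "primepi x < x * (S + M_a/L^6)"
    proof -
      have "primepi x < x * S + M_a * x / L ^ 6"
        using assms(2)[OF xgt] unfolding L_def[symmetric] sum5 S_def by simp
      also have "x * S + M_a * x / L ^ 6 = x * (S + M_a/L^6)" by (simp add: distrib_left)
      finally show ?thesis .
    qed
    have lo: "(x / exp 1) * (T + m_a/(L-1)^6) < primepi (x / exp 1)"
    proof -
      have "(x / exp 1) * T + m_a * (x / exp 1) / (L-1) ^ 6 < primepi (x / exp 1)"
        using assms(2)[OF xe] unfolding lndiv L_def[symmetric] sum5 T_def by simp
      moreover have "(x / exp 1) * T + m_a * (x / exp 1) / (L-1) ^ 6 = (x / exp 1) * (T + m_a/(L-1)^6)"
        by (simp add: distrib_left)
      ultimately show ?thesis by simp
    qed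
    have key: "(S + M_a/L^6)^2 < (1/L) * (T + m_a/(L-1)^6)"
      using x0[of x] hx unfolding L_def[symmetric] S_def T_def by simp
    have p0: "primepi x \<ge> 0" by (simp add: primepi_def)
    have x2: "x^2 > 0" using xpos by simp
    have "primepi x ^ 2 < (x * (S + M_a/L^6))^2"
      using up p0 by (intro power_strict_mono) auto
    also have "\<dots> = x^2 * (S + M_a/L^6)^2"
      by (rule power_mult_distrib)
    also have "\<dots> < x^2 * ((1/L) * (T + m_a/(L-1)^6))"
      using key x2 by (rule mult_strict_left_mono)
    also have "\<dots> = exp 1 * x / L * ((x / exp 1) * (T + m_a/(L-1)^6))"
      by (simp add: power2_eq_square)
    also have "\<dots> < exp 1 * x / L * primepi (x / exp 1)"
      using lo xpos lnpos unfolding L_def by (intro mult_strict_left_mono) auto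
    finally show "primepi x ^ 2 < exp 1 * x / ln x * primepi (x / exp 1)" unfolding L_def .
  qed
qed
end
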